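(* Let $\mathbb{E}$ be a regular category, $\Sigma$ a fibrational class of split epimorphisms, and suppose $\mathbb{E}$ is a $\Sigma$-Mal'tsev category. Let $R$ be a reflexive relation and $S$ a symmetric $\Sigma$-relation on an object $X$. Then $R$ and $S$ permute: $R\circ S=S\circ R$.
   Context: A split epimorphism is a pair $(f,s)$ with $fs=1$. A class $\Sigma$ of split epimorphisms is fibrational if it contains all split epimorphisms $(f,s)$ with $f$ invertible and is stable under pullback along any morphism. A pair of morphisms with common codomain $Z$ is jointly extremally epic if it factors jointly through no non-invertible monomorphism into $Z$. $\mathbb{E}$ is $\Sigma$-Mal'tsev if for every split epimorphism $(f,s)\colon X\rightleftarrows Y$ in $\Sigma$ and every split epimorphism $(g,t)$ with $g\colon Y'\to Y$, letting $X'=Y'\times_YX$, $s'=(1_{Y'},sg)$, $\bar t=(tf,1_X)$, the pair $(s',\bar t)$ is jointly extremally epic. A $\Sigma$-relation on $X$ is a reflexive relation $(d_0,d_1)\colon S\rightarrowtail X\times X$ with reflexivity $s_0$ such that $(d_0,s_0)\in\Sigma$. In a regular category, for relations $R$ on $X$ and $S$ on $X$, the composite $R\circ S$ is the image of the morphism $(d_0^R\pi_0,d_1^S\pi_1)\colon T\to X\times X$, where $T$ is the pullback of $d_0^S$ along $d_1^R$ with projections $\pi_0\colon T\to R$, $\pi_1\colon T\to S$ (so in set-theoretic terms $x(R\circ S)z$ iff $xRySz$ for some $y$). *)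

theory Defs
  imports Main
begin

text \<open>A small self-contained rendering of (locally small, not necessarily small)
categories: objects of type 'o, arrows of type 'a, with partial composition
  cmp C g f  =  g after f  (defined when cod f = dom g).\<close>

record ('o, 'a) cat =
  Ob  :: "'o set"
  Ar  :: "'a set"
  Dom :: "'a \<Rightarrow> 'o"
  Cod :: "'a \<Rightarrow> 'o"
  cmp :: "'a \<Rightarrow> 'a \<Rightarrow> 'a"
  idn :: "'o \<Rightarrow> 'a"

definition arr :: "('o,'a,'m) cat_scheme \<Rightarrow> 'a \<Rightarrow> 'o \<Rightarrow> 'o \<Rightarrow> bool" where
  "arr C f X Y \<longleftrightarrow> f \<in> Ar C \<and> Dom C f = X \<and> Cod C f = Y"

definition category :: "('o,'a,'m) cat_scheme \<Rightarrow> bool" where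
  "category C \<longleftrightarrow>
     (\<forall>f \<in> Ar C. Dom C f \<in> Ob C \<and> Cod C f \<in> Ob C) \<and>
     (\<forall>X \<in> Ob C. arr C (idn C X) X X) \<and>
     (\<forall>f \<in> Ar C. \<forall>g \<in> Ar C. Cod C f = Dom C g \<longrightarrow>
         arr C (cmp C g f) (Dom C f) (Cod C g)) \<and>
     (\<forall>f \<in> Ar C. cmp C f (idn C (Dom C f)) = f \<and> cmp C (idn C (Cod C f)) f = f) \<and>
     (\<forall>f \<in> Ar C. \<forall>g \<in> Ar C. \<forall>h \<in> Ar C. Cod C f = Dom C g \<longrightarrow> Cod C g = Dom C h \<longrightarrow>
         cmp C h (cmp C g f) = cmp C (cmp C h g) f)"

definition mono :: "('o,'a,'m) cat_scheme \<Rightarrow> 'a \<Rightarrow> bool" where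
  "mono C m \<longleftrightarrow> m \<in> Ar C \<and>
     (\<forall>a b W. arr C a W (Dom C m) \<longrightarrow> arr C b W (Dom C m) \<longrightarrow>
        cmp C m a = cmp C m b \<longrightarrow> a = b)"

definition iso :: "('o,'a,'m) cat_scheme \<Rightarrow> 'a \<Rightarrow> bool" where
  "iso C f \<longleftrightarrow> f \<in> Ar C \<and> (\<exists>g. arr C g (Cod C f) (Dom C f) \<and>
      cmp C g f = idn C (Dom C f) \<and> cmp C f g = idn C (Cod C f))"

definition coequalizer :: "('o,'a,'m) cat_scheme \<Rightarrow> 'a \<Rightarrow> 'a \<Rightarrow> 'a \<Rightarrow> bool" where
  "coequalizer C a b e \<longleftrightarrow>
     (\<exists>X Y Q. arr C a X Y \<and> arr C b X Y \<and> arr C e Y Q \<and> cmp C e a = cmp C e b \<and>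
        (\<forall>h W. arr C h Y W \<longrightarrow> cmp C h a = cmp C h b \<longrightarrow>
           (\<exists>!k. arr C k Q W \<and> cmp C k e = h)))"

definition regular_epi :: "('o,'a,'m) cat_scheme \<Rightarrow> 'a \<Rightarrow> bool" where
  "regular_epi C e \<longleftrightarrow> (\<exists>a b. coequalizer C a b e)"

text \<open>pullback C f g p q: the square  f p = g q  (f : A \<rightarrow> Z, g : B \<rightarrow> Z,
  p : P \<rightarrow> A, q : P \<rightarrow> B) is a pullback.  Then q is the pullback of f along g.\<close>
definition pullback :: "('o,'a,'m) cat_scheme \<Rightarrow> 'a \<Rightarrow> 'a \<Rightarrow> 'a \<Rightarrow> 'a \<Rightarrow> bool" where
  "pullback C f g p q \<longleftrightarrow>
     (\<exists>A B Z P. arr C f A Z \<and> arr C g B Z \<and> arr C p P A \<and> arr C q P B \<and>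
        cmp C f p = cmp C g q \<and>
        (\<forall>x y W. arr C x W A \<longrightarrow> arr C y W B \<longrightarrow> cmp C f x = cmp C g y \<longrightarrow>
           (\<exists>!u. arr C u W P \<and> cmp C p u = x \<and> cmp C q u = y)))"

definition terminal :: "('o,'a,'m) cat_scheme \<Rightarrow> 'o \<Rightarrow> bool" where
  "terminal C T \<longleftrightarrow> T \<in> Ob C \<and> (\<forall>X \<in> Ob C. \<exists>!t. arr C t X T)"

definition regular_category :: "('o,'a,'m) cat_scheme \<Rightarrow> bool" where
  "regular_category C \<longleftrightarrow> category C \<and>
     (\<exists>T. terminal C T) \<and>
     (\<forall>f g. f \<in> Ar C \<longrightarrow> g \<in> Ar C \<longrightarrow> Cod C f = Cod C g \<longrightarrow>
        (\<exists>p q. pullback C f g p q)) \<and>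
     (\<forall>f \<in> Ar C. \<exists>e m. regular_epi C e \<and> mono C m \<and> Cod C e = Dom C m \<and>
        cmp C m e = f) \<and>
     (\<forall>f g p q. pullback C f g p q \<longrightarrow> regular_epi C f \<longrightarrow> regular_epi C q)"

definition split_epi :: "('o,'a,'m) cat_scheme \<Rightarrow> 'a \<Rightarrow> 'a \<Rightarrow> bool" where
  "split_epi C f s \<longleftrightarrow> f \<in> Ar C \<and> s \<in> Ar C \<and> Dom C s = Cod C f \<and>
     Cod C s = Dom C f \<and> cmp C f s = idn C (Cod C f)"

text \<open>A fibrational class of split epimorphisms: contains all split epis with f
invertible and is stable under pullback along any morphism g : Y' \<rightarrow> Y
(for every pullback X' of f along g, with projections f' : X' \<rightarrow> Y', g' : X' \<rightarrow> X,
and induced section s' = (1, s g)).\<close>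
definition fibrational :: "('o,'a,'m) cat_scheme \<Rightarrow> ('a \<times> 'a) set \<Rightarrow> bool" where
  "fibrational C \<Sigma> \<longleftrightarrow>
     (\<forall>(f, s) \<in> \<Sigma>. split_epi C f s) \<and>
     (\<forall>f s. split_epi C f s \<longrightarrow> iso C f \<longrightarrow> (f, s) \<in> \<Sigma>) \<and>
     (\<forall>f s g f' g' s'. (f, s) \<in> \<Sigma> \<longrightarrow> g \<in> Ar C \<longrightarrow> Cod C g = Cod C f \<longrightarrow>
        pullback C f g g' f' \<longrightarrow>
        arr C s' (Dom C g) (Dom C f') \<longrightarrow>
        cmp C f' s' = idn C (Dom C g) \<longrightarrow> cmp C g' s' = cmp C s g \<longrightarrow>
        (f', s') \<in> \<Sigma>)"

definition jointly_extremally_epic :: "('o,'a,'m) cat_scheme \<Rightarrow> 'a \<Rightarrow> 'a \<Rightarrow> bool" where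
  "jointly_extremally_epic C a b \<longleftrightarrow> a \<in> Ar C \<and> b \<in> Ar C \<and> Cod C a = Cod C b \<and>
     (\<forall>m u v. mono C m \<longrightarrow> Cod C m = Cod C a \<longrightarrow>
        arr C u (Dom C a) (Dom C m) \<longrightarrow> arr C v (Dom C b) (Dom C m) \<longrightarrow>
        cmp C m u = a \<longrightarrow> cmp C m v = b \<longrightarrow> iso C m)"

text \<open>Sigma-Mal'tsev: for (f,s) : X \<rightleftarrows> Y in Sigma and a split epi (g,t), g : Y' \<rightarrow> Y,
with X' = Y' \<times>_Y X (projections f' : X' \<rightarrow> Y', g' : X' \<rightarrow> X), s' = (1, s g),
tbar = (t f, 1), the pair (s', tbar) is jointly extremally epic.\<close>
definition sigma_maltsev :: "('o,'a,'m) cat_scheme \<Rightarrow> ('a \<times> 'a) set \<Rightarrow> bool" where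
  "sigma_maltsev C \<Sigma> \<longleftrightarrow>
     (\<forall>f s g t f' g' s' tb. (f, s) \<in> \<Sigma> \<longrightarrow> split_epi C g t \<longrightarrow> Cod C g = Cod C f \<longrightarrow>
        pullback C f g g' f' \<longrightarrow>
        arr C s' (Dom C g) (Dom C f') \<longrightarrow>
        cmp C f' s' = idn C (Dom C g) \<longrightarrow> cmp C g' s' = cmp C s g \<longrightarrow>
        arr C tb (Dom C f) (Dom C f') \<longrightarrow>
        cmp C f' tb = cmp C t f \<longrightarrow> cmp C g' tb = idn C (Dom C f) \<longrightarrow>
        jointly_extremally_epic C s' tb)"

text \<open>A relation on X: a span (d0, d1) : S \<rightarrow> X with (d0,d1) : S \<rightarrow> X \<times> X monic,
i.e. d0, d1 jointly monic.\<close>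
definition relation :: "('o,'a,'m) cat_scheme \<Rightarrow> 'o \<Rightarrow> 'a \<Rightarrow> 'a \<Rightarrow> bool" where
  "relation C X d0 d1 \<longleftrightarrow> arr C d0 (Dom C d0) X \<and> arr C d1 (Dom C d0) X \<and>
     (\<forall>a b W. arr C a W (Dom C d0) \<longrightarrow> arr C b W (Dom C d0) \<longrightarrow>
        cmp C d0 a = cmp C d0 b \<longrightarrow> cmp C d1 a = cmp C d1 b \<longrightarrow> a = b)"

definition reflexivity :: "('o,'a,'m) cat_scheme \<Rightarrow> 'o \<Rightarrow> 'a \<Rightarrow> 'a \<Rightarrow> 'a \<Rightarrow> bool" where
  "reflexivity C X d0 d1 s0 \<longleftrightarrow> arr C s0 X (Dom C d0) \<and>
     cmp C d0 s0 = idn C X \<and> cmp C d1 s0 = idn C X"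

definition reflexive_relation :: "('o,'a,'m) cat_scheme \<Rightarrow> 'o \<Rightarrow> 'a \<Rightarrow> 'a \<Rightarrow> bool" where
  "reflexive_relation C X d0 d1 \<longleftrightarrow> relation C X d0 d1 \<and> (\<exists>s0. reflexivity C X d0 d1 s0)"

definition symmetric_relation :: "('o,'a,'m) cat_scheme \<Rightarrow> 'o \<Rightarrow> 'a \<Rightarrow> 'a \<Rightarrow> bool" where
  "symmetric_relation C X d0 d1 \<longleftrightarrow> relation C X d0 d1 \<and>
     (\<exists>\<sigma>. arr C \<sigma> (Dom C d0) (Dom C d0) \<and> cmp C d0 \<sigma> = d1 \<and> cmp C d1 \<sigma> = d0)"

definition sigma_relation :: "('o,'a,'m) cat_scheme \<Rightarrow> ('a \<times> 'a) set \<Rightarrow> 'o \<Rightarrow> 'a \<Rightarrow> 'a \<Rightarrow> bool" where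
  "sigma_relation C \<Sigma> X d0 d1 \<longleftrightarrow> relation C X d0 d1 \<and>
     (\<exists>s0. reflexivity C X d0 d1 s0 \<and> (d0, s0) \<in> \<Sigma>)"

text \<open>(u0, u1) is (a representative of) the composite R \<circ> S of R = (r0, r1) and
S = (s0, s1): T is the pullback of s0 along r1 with projections
pi0 : T \<rightarrow> R, pi1 : T \<rightarrow> S, and (u0, u1) is the image of (r0 pi0, s1 pi1), i.e.
(r0 pi0, s1 pi1) = (u0, u1) e with e a regular epi and (u0,u1) jointly monic.\<close>
definition is_composite :: "('o,'a,'m) cat_scheme \<Rightarrow> 'o \<Rightarrow> 'a \<Rightarrow> 'a \<Rightarrow> 'a \<Rightarrow> 'a \<Rightarrow> 'a \<Rightarrow> 'a \<Rightarrow> bool" where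
  "is_composite C X r0 r1 s0 s1 u0 u1 \<longleftrightarrow>
     (\<exists>pi0 pi1 e. pullback C r1 s0 pi0 pi1 \<and> regular_epi C e \<and>
        arr C e (Dom C pi0) (Dom C u0) \<and>
        cmp C u0 e = cmp C r0 pi0 \<and> cmp C u1 e = cmp C s1 pi1 \<and>
        relation C X u0 u1)"

definition rel_le :: "('o,'a,'m) cat_scheme \<Rightarrow> 'a \<Rightarrow> 'a \<Rightarrow> 'a \<Rightarrow> 'a \<Rightarrow> bool" where
  "rel_le C a0 a1 b0 b1 \<longleftrightarrow>
     (\<exists>h. arr C h (Dom C a0) (Dom C b0) \<and> cmp C b0 h = a0 \<and> cmp C b1 h = a1)"

end

theory Submission
  imports Defs
begin

locale cc = fixes C :: "('o,'a) cat" assumes cat: "category C"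
begin

lemma arrD: "arr C f A B \<Longrightarrow> f \<in> Ar C \<and> Dom C f = A \<and> Cod C f = B"
  by (simp add: arr_def)

lemma arrI: "f \<in> Ar C \<Longrightarrow> arr C f (Dom C f) (Cod C f)"
  by (simp add: arr_def)

lemma catD: "\<forall>f \<in> Ar C. Dom C f \<in> Ob C \<and> Cod C f \<in> Ob C"
  "\<forall>X \<in> Ob C. arr C (idn C X) X X"
  "\<forall>f \<in> Ar C. \<forall>g \<in> Ar C. Cod C f = Dom C g \<longrightarrow> arr C (cmp C g f) (Dom C f) (Cod C g)"
  "\<forall>f \<in> Ar C. cmp C f (idn C (Dom C f)) = f \<and> cmp C (idn C (Cod C f)) f = f"
  "\<forall>f \<in> Ar C. \<forall>g \<in> Ar C. \<forall>h \<in> Ar C. Cod C f = Dom C g \<longrightarrow> Cod C g = Dom C h \<longrightarrow>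
         cmp C h (cmp C g f) = cmp C (cmp C h g) f"
  using cat unfolding category_def by blast+

lemma comp: "arr C f A B \<Longrightarrow> arr C g B D \<Longrightarrow> arr C (cmp C g f) A D"
  using catD(3) unfolding arr_def by auto

lemma assoc: "arr C f A B \<Longrightarrow> arr C g B D \<Longrightarrow> arr C h D E \<Longrightarrow>
   cmp C h (cmp C g f) = cmp C (cmp C h g) f"
  using catD(5) unfolding arr_def by auto

lemma idl: "arr C f A B \<Longrightarrow> cmp C (idn C B) f = f"
  using catD(4) unfolding arr_def by auto

lemma idr: "arr C f A B \<Longrightarrow> cmp C f (idn C A) = f"
  using catD(4) unfolding arr_def by auto

lemma idarr: "A \<in> Ob C \<Longrightarrow> arr C (idn C A) A A"
  using catD(2) by auto

lemma arr_ob: "arr C f A B \<Longrightarrow> A \<in> Ob C" "arr C f A B \<Longrightarrow> B \<in> Ob C"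
  using catD(1) unfolding arr_def by auto

lemma pbD: assumes "pullback C f g p q"
  shows "arr C f (Dom C f) (Cod C f)" "arr C g (Dom C g) (Cod C f)"
    "arr C p (Dom C p) (Dom C f)" "arr C q (Dom C p) (Dom C g)" "cmp C f p = cmp C g q"
    "\<And>x y W. arr C x W (Dom C f) \<Longrightarrow> arr C y W (Dom C g) \<Longrightarrow> cmp C f x = cmp C g y \<Longrightarrow>
        \<exists>!u. arr C u W (Dom C p) \<and> cmp C p u = x \<and> cmp C q u = y"
proof -
  from assms obtain A B Z P where H: "arr C f A Z" "arr C g B Z" "arr C p P A" "arr C q P B"
        "cmp C f p = cmp C g q"
        "\<forall>x y W. arr C x W A \<longrightarrow> arr C y W B \<longrightarrow> cmp C f x = cmp C g y \<longrightarrow>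
           (\<exists>!u. arr C u W P \<and> cmp C p u = x \<and> cmp C q u = y)"
    unfolding pullback_def by blast
  have e: "Dom C f = A" "Cod C f = Z" "Dom C g = B" "Dom C p = P"
    using H unfolding arr_def by auto
  show "arr C f (Dom C f) (Cod C f)" "arr C g (Dom C g) (Cod C f)"
    "arr C p (Dom C p) (Dom C f)" "arr C q (Dom C p) (Dom C g)" "cmp C f p = cmp C g q"
    using H e by auto
  show "\<And>x y W. arr C x W (Dom C f) \<Longrightarrow> arr C y W (Dom C g) \<Longrightarrow> cmp C f x = cmp C g y \<Longrightarrow>
        \<exists>!u. arr C u W (Dom C p) \<and> cmp C p u = x \<and> cmp C q u = y"
    using H(6) e by auto
qed

lemma pb_sym: assumes "pullback C f g p q" shows "pullback C g f q p"
proof -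
  from assms obtain A B Z P where H: "arr C f A Z" "arr C g B Z" "arr C p P A" "arr C q P B"
        "cmp C f p = cmp C g q"
        "\<forall>x y W. arr C x W A \<longrightarrow> arr C y W B \<longrightarrow> cmp C f x = cmp C g y \<longrightarrow>
           (\<exists>!u. arr C u W P \<and> cmp C p u = x \<and> cmp C q u = y)"
    unfolding pullback_def by blast
  have U: "\<forall>x y W. arr C x W B \<longrightarrow> arr C y W A \<longrightarrow> cmp C g x = cmp C f y \<longrightarrow>
           (\<exists>!u. arr C u W P \<and> cmp C q u = x \<and> cmp C p u = y)"
  proof (intro allI impI)
    fix x y W assume a: "arr C x W B" "arr C y W A" "cmp C g x = cmp C f y"
    have "\<exists>!u. arr C u W P \<and> cmp C p u = y \<and> cmp C q u = x" using H(6) a by simp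
    thus "\<exists>!u. arr C u W P \<and> cmp C q u = x \<and> cmp C p u = y" by (simp add: conj_ac)
  qed
  show ?thesis unfolding pullback_def
    apply (rule exI[of _ B], rule exI[of _ A], rule exI[of _ Z], rule exI[of _ P])
    using H(1-5) U by simp
qed

lemma pb_ex: "pullback C f g p q \<Longrightarrow> arr C x W (Dom C f) \<Longrightarrow> arr C y W (Dom C g) \<Longrightarrow>
   cmp C f x = cmp C g y \<Longrightarrow> \<exists>u. arr C u W (Dom C p) \<and> cmp C p u = x \<and> cmp C q u = y"
  using pbD(6) by blast

lemma pb_uniq: assumes pb: "pullback C f g p q" and u: "arr C u W (Dom C p)"
  and u': "arr C u' W (Dom C p)" and e0: "cmp C p u = cmp C p u'" and e1: "cmp C q u = cmp C q u'"
  shows "u = u'"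
proof -
  have a: "arr C (cmp C p u) W (Dom C f)" using comp[OF u pbD(3)[OF pb]] .
  have b: "arr C (cmp C q u) W (Dom C g)" using comp[OF u pbD(4)[OF pb]] .
  have c: "cmp C f (cmp C p u) = cmp C g (cmp C q u)"
    using assoc[OF u pbD(3)[OF pb] pbD(1)[OF pb]] assoc[OF u pbD(4)[OF pb] pbD(2)[OF pb]] pbD(5)[OF pb]
    by simp
  from pbD(6)[OF pb a b c] u u' e0 e1 show ?thesis by metis
qed

lemma regepi_epi: assumes "regular_epi C e" "arr C x (Cod C e) W" "arr C y (Cod C e) W"
  "cmp C x e = cmp C y e" shows "x = y"
proof -
  from assms(1) obtain a b Xa Y Q where ar: "arr C a Xa Y" "arr C b Xa Y" "arr C e Y Q"
    "cmp C e a = cmp C e b" and U: "\<And>h W. arr C h Y W \<Longrightarrow> cmp C h a = cmp C h b \<Longrightarrow>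
           (\<exists>!k. arr C k Q W \<and> cmp C k e = h)"
    unfolding regular_epi_def coequalizer_def by blast
  have Q: "Cod C e = Q" using ar(3) arrD by blast
  have h: "arr C (cmp C x e) Y W" using comp[OF ar(3)] assms(2) Q by simp
  have "cmp C (cmp C x e) a = cmp C (cmp C x e) b"
    using assoc[OF ar(1) ar(3), of x W] assoc[OF ar(2) ar(3), of x W] assms(2) Q ar(4) by simp
  from U[OF h this] assms Q show ?thesis by metis
qed

lemma regepi_lift: assumes E: "regular_epi C e" and rel: "relation C X v0 v1"
  and k: "arr C k (Dom C e) (Dom C v0)" and u0: "arr C u0 (Cod C e) X" and u1: "arr C u1 (Cod C e) X"
  and e0: "cmp C u0 e = cmp C v0 k" and e1: "cmp C u1 e = cmp C v1 k"
  shows "\<exists>h. arr C h (Cod C e) (Dom C v0) \<and> cmp C v0 h = u0 \<and> cmp C v1 h = u1"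
proof -
  from E obtain a b Xa Y Q where ar: "arr C a Xa Y" "arr C b Xa Y" "arr C e Y Q"
    "cmp C e a = cmp C e b" and U: "\<And>h W. arr C h Y W \<Longrightarrow> cmp C h a = cmp C h b \<Longrightarrow>
           (\<exists>!k. arr C k Q W \<and> cmp C k e = h)"
    unfolding regular_epi_def coequalizer_def by blast
  have Q: "Cod C e = Q" "Dom C e = Y" using ar(3) arrD by blast+
  have v0: "arr C v0 (Dom C v0) X" and v1: "arr C v1 (Dom C v0) X"
    using rel[unfolded relation_def] by auto
  have ka: "arr C (cmp C k a) Xa (Dom C v0)" using comp[OF ar(1)] k Q by simp
  have kb: "arr C (cmp C k b) Xa (Dom C v0)" using comp[OF ar(2)] k Q by simp
  have "cmp C v0 (cmp C k a) = cmp C v0 (cmp C k b)"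
  proof -
    have "cmp C v0 (cmp C k a) = cmp C (cmp C v0 k) a" using assoc[OF ar(1) _ v0] k Q by simp
    also have "\<dots> = cmp C (cmp C u0 e) a" using e0 by simp
    also have "\<dots> = cmp C u0 (cmp C e a)" using assoc[OF ar(1) ar(3)] u0 Q by simp
    also have "\<dots> = cmp C u0 (cmp C e b)" using ar(4) by simp
    also have "\<dots> = cmp C (cmp C u0 e) b" using assoc[OF ar(2) ar(3)] u0 Q by simp
    also have "\<dots> = cmp C v0 (cmp C k b)" using assoc[OF ar(2) _ v0] k Q e0 by simp
    finally show ?thesis .
  qed
  moreover have "cmp C v1 (cmp C k a) = cmp C v1 (cmp C k b)"
  proof -
    have "cmp C v1 (cmp C k a) = cmp C (cmp C v1 k) a" using assoc[OF ar(1) _ v1] k Q by simp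
    also have "\<dots> = cmp C (cmp C u1 e) a" using e1 by simp
    also have "\<dots> = cmp C u1 (cmp C e a)" using assoc[OF ar(1) ar(3)] u1 Q by simp
    also have "\<dots> = cmp C u1 (cmp C e b)" using ar(4) by simp
    also have "\<dots> = cmp C (cmp C u1 e) b" using assoc[OF ar(2) ar(3)] u1 Q by simp
    also have "\<dots> = cmp C v1 (cmp C k b)" using assoc[OF ar(2) _ v1] k Q e1 by simp
    finally show ?thesis .
  qed
  ultimately have kab: "cmp C k a = cmp C k b"
    using rel[unfolded relation_def, THEN conjunct2, THEN conjunct2, rule_format, OF ka kb] by blast
  have kY: "arr C k Y (Dom C v0)" using k Q by simp
  from U[OF kY kab] obtain h where h: "arr C h Q (Dom C v0)" "cmp C h e = k" by blast
  have "cmp C (cmp C v0 h) e = cmp C u0 e" using assoc[OF ar(3) h(1) v0] h(2) e0 by simp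
  hence "cmp C v0 h = u0" using regepi_epi[OF E _ u0] comp[OF h(1) v0] Q by simp
  moreover have "cmp C (cmp C v1 h) e = cmp C u1 e" using assoc[OF ar(3) h(1) v1] h(2) e1 by simp
  hence "cmp C v1 h = u1" using regepi_epi[OF E _ u1] comp[OF h(1) v1] Q by simp
  ultimately show ?thesis using h(1) Q by auto
qed


lemma rel_arr: "relation C X d0 d1 \<Longrightarrow> arr C d0 (Dom C d0) X \<and> arr C d1 (Dom C d0) X"
  unfolding relation_def by blast

lemma rel_swap: assumes "relation C X d0 d1" shows "relation C X d1 d0"
proof -
  have D: "Dom C d1 = Dom C d0" using assms unfolding relation_def arr_def by blast
  show ?thesis using assms unfolding relation_def D by blast
qed

lemma comp_swap: assumes "is_composite C X a0 a1 b0 b1 w0 w1"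
  shows "is_composite C X b1 b0 a1 a0 w1 w0"
proof -
  from assms obtain pi0 pi1 e where H: "pullback C a1 b0 pi0 pi1" "regular_epi C e"
        "arr C e (Dom C pi0) (Dom C w0)"
        "cmp C w0 e = cmp C a0 pi0" "cmp C w1 e = cmp C b1 pi1"
        "relation C X w0 w1" unfolding is_composite_def by blast
  have D1: "Dom C pi1 = Dom C pi0" using pbD(4)[OF H(1)] arrD by blast
  have D2: "Dom C w1 = Dom C w0" using H(6) unfolding relation_def arr_def by blast
  show ?thesis unfolding is_composite_def
    using pb_sym[OF H(1)] H(2-5) rel_swap[OF H(6)] D1 D2 by metis
qed


lemma product: assumes reg: "regular_category C" and XO: "X \<in> Ob C"
  shows "\<exists>p0 p1. arr C p0 (Dom C p0) X \<and> arr C p1 (Dom C p0) X \<and>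
     (\<forall>x y W. arr C x W X \<longrightarrow> arr C y W X \<longrightarrow>
         (\<exists>u. arr C u W (Dom C p0) \<and> cmp C p0 u = x \<and> cmp C p1 u = y)) \<and>
     (\<forall>u u' W. arr C u W (Dom C p0) \<longrightarrow> arr C u' W (Dom C p0) \<longrightarrow>
         cmp C p0 u = cmp C p0 u' \<longrightarrow> cmp C p1 u = cmp C p1 u' \<longrightarrow> u = u')"
proof -
  from reg obtain T0 where T0: "terminal C T0" unfolding regular_category_def by blast
  from T0 XO obtain t where t: "arr C t X T0" unfolding terminal_def by blast
  have tA: "t \<in> Ar C" and tD: "Dom C t = X" using t arrD by blast+
  from reg tA obtain p0 p1 where pb: "pullback C t t p0 p1" unfolding regular_category_def by blast
  have a0: "arr C p0 (Dom C p0) X" and a1: "arr C p1 (Dom C p0) X"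
    using pbD(3,4)[OF pb] tD by auto
  have ex: "\<forall>x y W. arr C x W X \<longrightarrow> arr C y W X \<longrightarrow>
         (\<exists>u. arr C u W (Dom C p0) \<and> cmp C p0 u = x \<and> cmp C p1 u = y)"
  proof (intro allI impI)
    fix x y W assume x: "arr C x W X" and y: "arr C y W X"
    have W: "W \<in> Ob C" using arr_ob(1)[OF x] .
    have "arr C (cmp C t x) W T0" "arr C (cmp C t y) W T0" using comp[OF x t] comp[OF y t] by auto
    hence e: "cmp C t x = cmp C t y" using T0 W unfolding terminal_def by blast
    show "\<exists>u. arr C u W (Dom C p0) \<and> cmp C p0 u = x \<and> cmp C p1 u = y"
      using pb_ex[OF pb] x y e tD by simp
  qed
  have un: "\<forall>u u' W. arr C u W (Dom C p0) \<longrightarrow> arr C u' W (Dom C p0) \<longrightarrow>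
         cmp C p0 u = cmp C p0 u' \<longrightarrow> cmp C p1 u = cmp C p1 u' \<longrightarrow> u = u'"
    using pb_uniq[OF pb] by blast
  show ?thesis using a0 a1 ex un by blast
qed


lemma core:
  assumes reg: "regular_category C" and malt: "sigma_maltsev C \<Sigma>"
   and relR: "relation C X r0 r1" and rho: "reflexivity C X r0 r1 \<rho>"
   and relA: "relation C X a0 a1" and al: "arr C \<alpha> X (Dom C a0)"
   and al0: "cmp C a0 \<alpha> = idn C X" and al1: "cmp C a1 \<alpha> = idn C X" and sig: "(a0, \<alpha>) \<in> \<Sigma>"
   and cu: "is_composite C X r0 r1 a0 a1 u0 u1" and cv: "is_composite C X a0 a1 r0 r1 v0 v1"
  shows "rel_le C u0 u1 v0 v1"
proof -
  define R where "R = Dom C r0"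
  define A where "A = Dom C a0"
  have r0: "arr C r0 R X" and r1: "arr C r1 R X" using rel_arr[OF relR] R_def by auto
  have a0: "arr C a0 A X" and a1: "arr C a1 A X" using rel_arr[OF relA] A_def by auto
  have al': "arr C \<alpha> X A" using al A_def by simp
  have rh: "arr C \<rho> X R" and rh0: "cmp C r0 \<rho> = idn C X" and rh1: "cmp C r1 \<rho> = idn C X"
    using rho R_def unfolding reflexivity_def by auto
  have XO: "X \<in> Ob C" using arr_ob(1)[OF rh] .
  have RO: "R \<in> Ob C" using arr_ob(1)[OF r0] .
  have AO: "A \<in> Ob C" using arr_ob(1)[OF a0] .
  have dr1: "Dom C r1 = R" "Cod C r1 = X" "Dom C a0 = A" "Cod C a0 = X" "Dom C a1 = A" "Dom C r0 = R"
    using r1 a0 a1 r0 arrD by blast+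
  from cu obtain pi0 pi1 e where cuH: "pullback C r1 a0 pi0 pi1" "regular_epi C e"
        "arr C e (Dom C pi0) (Dom C u0)"
        "cmp C u0 e = cmp C r0 pi0" "cmp C u1 e = cmp C a1 pi1"
        "relation C X u0 u1" unfolding is_composite_def by blast
  define T where "T = Dom C pi0"
  have p0: "arr C pi0 T R" and p1: "arr C pi1 T A" using pbD(3,4)[OF cuH(1)] T_def dr1 by auto
  from cv obtain q0 q1 e' where cvH: "pullback C a1 r0 q0 q1" "regular_epi C e'"
        "arr C e' (Dom C q0) (Dom C v0)"
        "cmp C v0 e' = cmp C a0 q0" "cmp C v1 e' = cmp C r1 q1"
        "relation C X v0 v1" unfolding is_composite_def by blast
  define Q where "Q = Dom C q0"
  define V where "V = Dom C v0"
  have q0: "arr C q0 Q A" and q1: "arr C q1 Q R" using pbD(3,4)[OF cvH(1)] Q_def dr1 by auto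
  have v0: "arr C v0 V X" and v1: "arr C v1 V X" using rel_arr[OF cvH(6)] V_def by auto
  have e': "arr C e' Q V" using cvH(3) Q_def V_def by simp
  have idR: "arr C (idn C R) R R" using idarr[OF RO] .
  have ar1: "arr C (cmp C \<alpha> r1) R A" using comp[OF r1 al'] .
  have "cmp C a0 (cmp C \<alpha> r1) = r1" using assoc[OF r1 al' a0] al0 idl[OF r1] by simp
  hence "cmp C r1 (idn C R) = cmp C a0 (cmp C \<alpha> r1)" using idr[OF r1] by simp
  then obtain s' where s': "arr C s' R T" "cmp C pi0 s' = idn C R" "cmp C pi1 s' = cmp C \<alpha> r1"
    using pb_ex[OF cuH(1), of "idn C R" R "cmp C \<alpha> r1"] idR ar1 dr1 T_def by auto
  have idA: "arr C (idn C A) A A" using idarr[OF AO] .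
  have ra0: "arr C (cmp C \<rho> a0) A R" using comp[OF a0 rh] .
  have "cmp C r1 (cmp C \<rho> a0) = a0" using assoc[OF a0 rh r1] rh1 idl[OF a0] by simp
  hence "cmp C r1 (cmp C \<rho> a0) = cmp C a0 (idn C A)" using idr[OF a0] by simp
  then obtain tb where tb: "arr C tb A T" "cmp C pi0 tb = cmp C \<rho> a0" "cmp C pi1 tb = idn C A"
    using pb_ex[OF cuH(1), of "cmp C \<rho> a0" A "idn C A"] idA ra0 dr1 T_def by auto
  have se: "split_epi C r1 \<rho>" unfolding split_epi_def using r1 rh rh1 arrD by blast
  have jee: "jointly_extremally_epic C s' tb"
    using malt[unfolded sigma_maltsev_def, rule_format, OF sig se _ pb_sym[OF cuH(1)]]
      s' tb dr1 T_def by auto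
  obtain P0 P1 where P0: "arr C P0 (Dom C P0) X" and P1: "arr C P1 (Dom C P0) X"
    and Pex: "\<And>x y W. arr C x W X \<Longrightarrow> arr C y W X \<Longrightarrow>
         (\<exists>u. arr C u W (Dom C P0) \<and> cmp C P0 u = x \<and> cmp C P1 u = y)"
    and Pun: "\<And>u u' W. arr C u W (Dom C P0) \<Longrightarrow> arr C u' W (Dom C P0) \<Longrightarrow>
         cmp C P0 u = cmp C P0 u' \<Longrightarrow> cmp C P1 u = cmp C P1 u' \<Longrightarrow> u = u'"
    using product[OF reg XO] by blast
  define P where "P = Dom C P0"
  note P0 = P0[folded P_def] and P1 = P1[folded P_def]
  note Pex = Pex[folded P_def] and Pun = Pun[folded P_def]
  obtain \<phi> where phi: "arr C \<phi> T P" "cmp C P0 \<phi> = cmp C r0 pi0" "cmp C P1 \<phi> = cmp C a1 pi1"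
    using Pex[OF comp[OF p0 r0] comp[OF p1 a1]] by blast
  obtain c where c: "arr C c V P" "cmp C P0 c = v0" "cmp C P1 c = v1"
    using Pex[OF v0 v1] by blast
  have phiA: "\<phi> \<in> Ar C" "c \<in> Ar C" "Cod C \<phi> = Cod C c" using phi c arrD by auto
  from reg phiA obtain m w where pbm: "pullback C \<phi> c m w" unfolding regular_category_def by blast
  define M where "M = Dom C m"
  have dphi: "Dom C \<phi> = T" "Dom C c = V" using phi c arrD by auto
  have m: "arr C m M T" and w: "arr C w M V" using pbD(3,4)[OF pbm] M_def dphi by auto
  have mw: "cmp C \<phi> m = cmp C c w" using pbD(5)[OF pbm] .
  have cmono: "\<And>x y W. arr C x W V \<Longrightarrow> arr C y W V \<Longrightarrow> cmp C c x = cmp C c y \<Longrightarrow> x = y"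
  proof -
    fix x y W assume x: "arr C x W V" and y: "arr C y W V" and eq: "cmp C c x = cmp C c y"
    have "cmp C v0 x = cmp C v0 y" using assoc[OF x c(1) P0] assoc[OF y c(1) P0] eq c by metis
    moreover have "cmp C v1 x = cmp C v1 y" using assoc[OF x c(1) P1] assoc[OF y c(1) P1] eq c by metis
    ultimately show "x = y" using cvH(6) x y V_def unfolding relation_def by blast
  qed
  have mono_m: "mono C m"
    unfolding mono_def
  proof (intro conjI allI impI)
    show "m \<in> Ar C" using m arrD by blast
    fix x y W assume x: "arr C x W (Dom C m)" and y: "arr C y W (Dom C m)" and eq: "cmp C m x = cmp C m y"
    have x': "arr C x W M" and y': "arr C y W M" using x y M_def by auto
    have "cmp C c (cmp C w x) = cmp C c (cmp C w y)"
      using assoc[OF x' w c(1)] assoc[OF y' w c(1)] assoc[OF x' m phi(1)] assoc[OF y' m phi(1)] eq mw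
      by metis
    hence "cmp C w x = cmp C w y" using cmono comp[OF x' w] comp[OF y' w] by blast
    thus "x = y" using pb_uniq[OF pbm x y eq] by blast
  qed
  have ar0: "arr C (cmp C \<alpha> r0) R A" using comp[OF r0 al'] .
  have "cmp C a1 (cmp C \<alpha> r0) = r0" using assoc[OF r0 al' a1] al1 idl[OF r0] by simp
  hence "cmp C a1 (cmp C \<alpha> r0) = cmp C r0 (idn C R)" using idr[OF r0] by simp
  then obtain z1 where z1: "arr C z1 R Q" "cmp C q0 z1 = cmp C \<alpha> r0" "cmp C q1 z1 = idn C R"
    using pb_ex[OF cvH(1), of "cmp C \<alpha> r0" R "idn C R"] ar0 idR dr1 Q_def by auto
  define h1 where "h1 = cmp C e' z1"
  have h1: "arr C h1 R V" using comp[OF z1(1) e'] h1_def by simp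
  have h1a: "cmp C v0 h1 = r0"
  proof -
    have "cmp C v0 h1 = cmp C (cmp C a0 q0) z1" using assoc[OF z1(1) e' v0] cvH(4) h1_def by simp
    also have "\<dots> = cmp C a0 (cmp C \<alpha> r0)" using assoc[OF z1(1) q0 a0] z1(2) by simp
    also have "\<dots> = r0" using assoc[OF r0 al' a0] al0 idl[OF r0] by simp
    finally show ?thesis .
  qed
  have h1b: "cmp C v1 h1 = r1"
  proof -
    have "cmp C v1 h1 = cmp C (cmp C r1 q1) z1" using assoc[OF z1(1) e' v1] cvH(5) h1_def by simp
    also have "\<dots> = r1" using assoc[OF z1(1) q1 r1] z1(3) idr[OF r1] by simp
    finally show ?thesis .
  qed
  have "cmp C c h1 = cmp C \<phi> s'"
  proof (rule Pun[OF comp[OF h1 c(1)] comp[OF s'(1) phi(1)]])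
    have "cmp C P0 (cmp C c h1) = r0" using assoc[OF h1 c(1) P0] c(2) h1a by simp
    moreover have "cmp C P0 (cmp C \<phi> s') = r0"
      using assoc[OF s'(1) phi(1) P0] phi(2) assoc[OF s'(1) p0 r0] s'(2) idr[OF r0] by simp
    ultimately show "cmp C P0 (cmp C c h1) = cmp C P0 (cmp C \<phi> s')" by simp
    have "cmp C P1 (cmp C c h1) = r1" using assoc[OF h1 c(1) P1] c(3) h1b by simp
    moreover have "cmp C P1 (cmp C \<phi> s') = r1"
      using assoc[OF s'(1) phi(1) P1] phi(3) assoc[OF s'(1) p1 a1] s'(3)
        assoc[OF r1 al' a1] al1 idl[OF r1] by simp
    ultimately show "cmp C P1 (cmp C c h1) = cmp C P1 (cmp C \<phi> s')" by simp
  qed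
  then obtain g1 where g1: "arr C g1 R M" "cmp C m g1 = s'"
    using pb_ex[OF pbm, of s' R h1] s'(1) h1 dphi M_def by metis
  have ra1: "arr C (cmp C \<rho> a1) A R" using comp[OF a1 rh] .
  have "cmp C r0 (cmp C \<rho> a1) = a1" using assoc[OF a1 rh r0] rh0 idl[OF a1] by simp
  hence "cmp C a1 (idn C A) = cmp C r0 (cmp C \<rho> a1)" using idr[OF a1] by simp
  then obtain z2 where z2: "arr C z2 A Q" "cmp C q0 z2 = idn C A" "cmp C q1 z2 = cmp C \<rho> a1"
    using pb_ex[OF cvH(1), of "idn C A" A "cmp C \<rho> a1"] ra1 idA dr1 Q_def by auto
  define h2 where "h2 = cmp C e' z2"
  have h2: "arr C h2 A V" using comp[OF z2(1) e'] h2_def by simp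
  have h2a: "cmp C v0 h2 = a0"
  proof -
    have "cmp C v0 h2 = cmp C (cmp C a0 q0) z2" using assoc[OF z2(1) e' v0] cvH(4) h2_def by simp
    also have "\<dots> = a0" using assoc[OF z2(1) q0 a0] z2(2) idr[OF a0] by simp
    finally show ?thesis .
  qed
  have h2b: "cmp C v1 h2 = a1"
  proof -
    have "cmp C v1 h2 = cmp C (cmp C r1 q1) z2" using assoc[OF z2(1) e' v1] cvH(5) h2_def by simp
    also have "\<dots> = cmp C r1 (cmp C \<rho> a1)" using assoc[OF z2(1) q1 r1] z2(3) by simp
    also have "\<dots> = a1" using assoc[OF a1 rh r1] rh1 idl[OF a1] by simp
    finally show ?thesis .
  qed
  have "cmp C c h2 = cmp C \<phi> tb"
  proof (rule Pun[OF comp[OF h2 c(1)] comp[OF tb(1) phi(1)]])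
    have "cmp C P0 (cmp C c h2) = a0" using assoc[OF h2 c(1) P0] c(2) h2a by simp
    moreover have "cmp C P0 (cmp C \<phi> tb) = a0"
      using assoc[OF tb(1) phi(1) P0] phi(2) assoc[OF tb(1) p0 r0] tb(2)
        assoc[OF a0 rh r0] rh0 idl[OF a0] by simp
    ultimately show "cmp C P0 (cmp C c h2) = cmp C P0 (cmp C \<phi> tb)" by simp
    have "cmp C P1 (cmp C c h2) = a1" using assoc[OF h2 c(1) P1] c(3) h2b by simp
    moreover have "cmp C P1 (cmp C \<phi> tb) = a1"
      using assoc[OF tb(1) phi(1) P1] phi(3) assoc[OF tb(1) p1 a1] tb(3) idr[OF a1] by simp
    ultimately show "cmp C P1 (cmp C c h2) = cmp C P1 (cmp C \<phi> tb)" by simp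
  qed
  then obtain g2 where g2: "arr C g2 A M" "cmp C m g2 = tb"
    using pb_ex[OF pbm, of tb A h2] tb(1) h2 dphi M_def by metis
  have ds: "Dom C s' = R" "Cod C s' = T" "Dom C tb = A" "Cod C m = T" "Dom C m = M"
    using s'(1) tb(1) m arrD by blast+
  have "iso C m" using jee mono_m g1 g2 ds
    unfolding jointly_extremally_epic_def by metis
  then obtain mi where mi: "arr C mi T M" "cmp C m mi = idn C T"
    unfolding iso_def using ds by metis
  define k where "k = cmp C w mi"
  have k: "arr C k T V" using comp[OF mi(1) w] k_def by simp
  have ck: "cmp C c k = \<phi>"
  proof -
    have "cmp C c k = cmp C (cmp C c w) mi" using assoc[OF mi(1) w c(1)] k_def by simp
    also have "\<dots> = cmp C \<phi> (cmp C m mi)" using assoc[OF mi(1) m phi(1)] mw by simp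
    also have "\<dots> = \<phi>" using mi(2) idr[OF phi(1)] by simp
    finally show ?thesis .
  qed
  have k0: "cmp C v0 k = cmp C r0 pi0" using assoc[OF k c(1) P0] c(2) ck phi(2) by simp
  have k1: "cmp C v1 k = cmp C a1 pi1" using assoc[OF k c(1) P1] c(3) ck phi(3) by simp
  have de: "Dom C e = T" "Cod C e = Dom C u0" using cuH(3) T_def arrD by blast+
  have u0: "arr C u0 (Cod C e) X" and u1: "arr C u1 (Cod C e) X" using rel_arr[OF cuH(6)] de by auto
  obtain h where "arr C h (Cod C e) (Dom C v0)" "cmp C v0 h = u0" "cmp C v1 h = u1"
    using regepi_lift[OF cuH(2) cvH(6) _ u0 u1] k de V_def cuH(4,5) k0 k1 by metis
  thus ?thesis unfolding rel_le_def using de by metis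
qed

end

theorem proposition2p6:
  fixes C :: "('o, 'a) cat" and \<Sigma> :: "('a \<times> 'a) set"
    and X :: 'o and r0 r1 s0 s1 :: 'a
  assumes "regular_category C"
    and "fibrational C \<Sigma>"
    and "sigma_maltsev C \<Sigma>"
    and "X \<in> Ob C"
    and "reflexive_relation C X r0 r1"
    and "sigma_relation C \<Sigma> X s0 s1"
    and "symmetric_relation C X s0 s1"
  shows "\<forall>u0 u1 v0 v1. is_composite C X r0 r1 s0 s1 u0 u1 \<longrightarrow>
           is_composite C X s0 s1 r0 r1 v0 v1 \<longrightarrow>
           rel_le C u0 u1 v0 v1 \<and> rel_le C v0 v1 u0 u1"
proof (intro allI impI conjI)
  note reg = assms(1)
  have "category C" using reg unfolding regular_category_def by blast
  then interpret cc C by unfold_locales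
  from assms(5) obtain \<rho> where relR: "relation C X r0 r1" and rho: "reflexivity C X r0 r1 \<rho>"
    unfolding reflexive_relation_def by blast
  from assms(6) obtain sr where relS: "relation C X s0 s1" and srr: "reflexivity C X s0 s1 sr"
    and sig: "(s0, sr) \<in> \<Sigma>" unfolding sigma_relation_def by blast
  from assms(7) obtain \<sigma> where sg: "arr C \<sigma> (Dom C s0) (Dom C s0)" "cmp C s0 \<sigma> = s1" "cmp C s1 \<sigma> = s0"
    unfolding symmetric_relation_def by blast
  define S where "S = Dom C s0"
  have s0: "arr C s0 S X" and s1: "arr C s1 S X" using rel_arr[OF relS] S_def by auto
  have sg': "arr C \<sigma> S S" using sg S_def by simp
  have sr: "arr C sr X S" "cmp C s0 sr = idn C X" "cmp C s1 sr = idn C X"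
    using srr S_def unfolding reflexivity_def by auto
  have XO: "X \<in> Ob C" using assms(4) .
  have SO: "S \<in> Ob C" using arr_ob(1)[OF s0] .
  fix u0 u1 v0 v1
  assume cu: "is_composite C X r0 r1 s0 s1 u0 u1" and cv: "is_composite C X s0 s1 r0 r1 v0 v1"
  show "rel_le C u0 u1 v0 v1"
    using core[OF reg assms(3) relR rho relS _ sr(2,3) sig cu cv] sr(1) S_def by simp
  have ss: "cmp C \<sigma> \<sigma> = idn C S"
  proof -
    have "cmp C s0 (cmp C \<sigma> \<sigma>) = cmp C s0 (idn C S)"
      using assoc[OF sg' sg' s0] sg idr[OF s0] by simp
    moreover have "cmp C s1 (cmp C \<sigma> \<sigma>) = cmp C s1 (idn C S)"
      using assoc[OF sg' sg' s1] sg idr[OF s1] by simp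
    ultimately show ?thesis using relS comp[OF sg' sg'] idarr[OF SO] S_def
      unfolding relation_def by blast
  qed
  define \<alpha> where "\<alpha> = cmp C \<sigma> sr"
  have al: "arr C \<alpha> X S" using comp[OF sr(1) sg'] \<alpha>_def by simp
  have al0: "cmp C s1 \<alpha> = idn C X" using assoc[OF sr(1) sg' s1] sg sr \<alpha>_def S_def by simp
  have al1: "cmp C s0 \<alpha> = idn C X" using assoc[OF sr(1) sg' s0] sg sr \<alpha>_def S_def by simp
  have idX: "arr C (idn C X) X X" using idarr[OF XO] .
  have pb: "pullback C s0 (idn C X) \<sigma> s1"
    unfolding pullback_def
  proof (intro exI conjI allI impI)
    show "arr C s0 S X" "arr C (idn C X) X X" "arr C \<sigma> S S" "arr C s1 S X" using s0 idX sg' s1 by auto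
    show "cmp C s0 \<sigma> = cmp C (idn C X) s1" using sg idl[OF s1] by simp
    fix x y W assume x: "arr C x W S" and y: "arr C y W X" and e: "cmp C s0 x = cmp C (idn C X) y"
    have ey: "cmp C s0 x = y" using e idl[OF y] by simp
    show "\<exists>!u. arr C u W S \<and> cmp C \<sigma> u = x \<and> cmp C s1 u = y"
    proof (rule ex1I[of _ "cmp C \<sigma> x"])
      have "cmp C \<sigma> (cmp C \<sigma> x) = x" using assoc[OF x sg' sg'] ss idl[OF x] by simp
      moreover have "cmp C s1 (cmp C \<sigma> x) = y" using assoc[OF x sg' s1] sg ey by simp
      ultimately show "arr C (cmp C \<sigma> x) W S \<and> cmp C \<sigma> (cmp C \<sigma> x) = x \<and> cmp C s1 (cmp C \<sigma> x) = y"
        using comp[OF x sg'] by simp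
      fix u assume u: "arr C u W S \<and> cmp C \<sigma> u = x \<and> cmp C s1 u = y"
      have uu: "arr C u W S" "cmp C \<sigma> u = x" using u by auto
      have "cmp C \<sigma> x = cmp C (cmp C \<sigma> \<sigma>) u" using assoc[OF uu(1) sg' sg'] uu(2) by simp
      also have "\<dots> = u" using ss idl[OF uu(1)] by simp
      finally show "u = cmp C \<sigma> x" by simp
    qed
  qed
  have sig2: "(s1, \<alpha>) \<in> \<Sigma>"
  proof -
    have d: "Dom C (idn C X) = X" "Cod C (idn C X) = X" "Dom C s1 = S" "Cod C s0 = X"
      using idX s1 s0 arrD by blast+
    have "cmp C \<sigma> \<alpha> = cmp C sr (idn C X)"
      using assoc[OF sr(1) sg' sg'] ss idl[OF sr(1)] idr[OF sr(1)] \<alpha>_def by simp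
    thus ?thesis
      using assms(2)[unfolded fibrational_def, THEN conjunct2, THEN conjunct2, rule_format,
          OF sig _ _ pb, of \<alpha>] idX al al0 d arrD by auto
  qed
  have relR': "relation C X r1 r0" using rel_swap[OF relR] .
  have dR: "Dom C r1 = Dom C r0" using rel_arr[OF relR] arrD by blast
  have rho': "reflexivity C X r1 r0 \<rho>" using rho dR unfolding reflexivity_def by simp
  have relS': "relation C X s1 s0" using rel_swap[OF relS] .
  have dS: "Dom C s1 = S" using s1 arrD by blast
  have "rel_le C v1 v0 u1 u0"
    using core[OF reg assms(3) relR' rho' relS' _ al0 al1 sig2 comp_swap[OF cv] comp_swap[OF cu]]
      al dS by simp
  moreover have "relation C X v0 v1" "relation C X u0 u1"
    using cv cu unfolding is_composite_def by blast+
  hence "Dom C v1 = Dom C v0" "Dom C u1 = Dom C u0"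
    using rel_arr arrD by blast+
  ultimately show "rel_le C v0 v1 u0 u1" unfolding rel_le_def by auto
qed

end
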